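(* In the finite-dimensional affine setting described in the context, for $\zeta\in A$ let $\hat{K}^{\mathrm{S}}_\zeta:C\to\mathbb{C}$ be $$\hat{K}^{\mathrm{S}}_\zeta(\varphi)=\exp\Big(\mathrm{i}\,\theta(\zeta,\varphi-c(\zeta))-\tfrac12\Omega(\varphi-c(\zeta),\varphi-c(\zeta))\Big).$$ Then the linear span of $\{\hat{K}^{\mathrm{S}}_\zeta:\zeta\in A\}$ is dense in $\mathrm{L}^2(C,\mu_C)$.
   Context: $A$ is a finite-dimensional real affine space over the vector space $L$. $\theta:A\times L\to\mathbb{R}$ is linear in its second argument and there is a bilinear form $[\cdot,\cdot]:L\times L\to\mathbb{R}$ with $\theta(\eta+\xi,\tau)=\theta(\eta,\tau)+[\xi,\tau]$ for all $\eta\in A$, $\xi,\tau\in L$; $\omega(\xi,\xi')=\frac12[\xi,\xi']-\frac12[\xi',\xi]$ is non-degenerate. $M=\{\tau\in L:[\xi,\tau]=0\ \forall\xi\in L\}$, $N=\{\tau\in L:[\tau,\xi]=0\ \forall\xi\in L\}$, $L=M\oplus N$ is assumed, $Q=L/M$ with quotient map $q$, and $\theta(\eta,\cdot)$ vanishes on $M$ so that $\theta$ is viewed as a map $A\times Q\to\mathbb{R}$. $C=A/M$ is an affine space over $Q$ with quotient map $c:A\to C$. $J:L\to L$ is linear with $J^2=-\mathrm{id}$, $\omega(J\cdot,J\cdot)=\omega$, and $g(\tau,\xi)=2\omega(\tau,J\xi)$ positive definite; $Q$ carries the quotient norm from $g$ and $j:Q\to L$ is the unique linear map with $q\circ j=\mathrm{id}_Q$,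 $j(Q)\subseteq JM$. $\Omega:Q\times Q\to\mathbb{C}$ is $\Omega(\phi,\phi')=g(j(\phi),j(\phi'))-\mathrm{i}[j(\phi),\phi']$. $\mu_C$ is the translation-invariant Lebesgue measure on $C$ normalized by $\int_C\exp(-g(j(\varphi-c(\eta)),j(\varphi-c(\eta))))\,\mathrm{d}\mu_C(\varphi)=1$ for some (equivalently any) $\eta\in A$. *)

theory Defs
  imports "HOL-Analysis.Analysis"
begin

text \<open>The affine space A over L is represented by L itself (after choosing
an origin); the quotient Q = L/M and the affine quotient C = A/M are both represented by a
finite-dimensional real vector space 'q together with a surjective linear map q : L \<rightarrow> 'q
whose kernel is M; the affine quotient map c is then q itself.\<close>

definition omega_of :: "('l::real_vector \<Rightarrow> 'l \<Rightarrow> real) \<Rightarrow> 'l \<Rightarrow> 'l \<Rightarrow> real" where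
  "omega_of br \<xi> \<xi>' = (1/2) * br \<xi> \<xi>' - (1/2) * br \<xi>' \<xi>"

definition g_of :: "('l::real_vector \<Rightarrow> 'l \<Rightarrow> real) \<Rightarrow> ('l \<Rightarrow> 'l) \<Rightarrow> 'l \<Rightarrow> 'l \<Rightarrow> real" where
  "g_of br J \<tau> \<xi> = 2 * omega_of br \<tau> (J \<xi>)"

definition Mker :: "('l::zero \<Rightarrow> 'l \<Rightarrow> real) \<Rightarrow> 'l set" where
  "Mker br = {\<tau>. \<forall>\<xi>. br \<xi> \<tau> = 0}"

definition Nker :: "('l::zero \<Rightarrow> 'l \<Rightarrow> real) \<Rightarrow> 'l set" where
  "Nker br = {\<tau>. \<forall>\<xi>. br \<tau> \<xi> = 0}"

text \<open>\<Omega>(\<phi>,\<phi>') = g(j \<phi>, j \<phi>') - i [j \<phi>, \<phi>'], where [j \<phi>, \<phi>'] := [j \<phi>, \<tau>] for any \<tau> with q \<tau> = \<phi>'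
  (well defined since [\<xi>, .] vanishes on M); we use the representative j \<phi>'.\<close>
definition Omega_of :: "('l::real_vector \<Rightarrow> 'l \<Rightarrow> real) \<Rightarrow> ('l \<Rightarrow> 'l) \<Rightarrow> ('q \<Rightarrow> 'l) \<Rightarrow> 'q \<Rightarrow> 'q \<Rightarrow> complex" where
  "Omega_of br J j \<phi> \<phi>' =
     complex_of_real (g_of br J (j \<phi>) (j \<phi>')) - \<i> * complex_of_real (br (j \<phi>) (j \<phi>'))"

text \<open>\<theta>(\<zeta>, \<psi>) for \<psi> \<in> Q is \<theta>(\<zeta>, \<tau>) for any representative \<tau> (well defined since \<theta>(\<zeta>,.)
  vanishes on M); we use the representative j \<psi>.\<close>
definition Khat :: "('l::real_vector \<Rightarrow> 'l \<Rightarrow> real) \<Rightarrow> ('l \<Rightarrow> 'l \<Rightarrow> real) \<Rightarrow> ('l \<Rightarrow> 'l) \<Rightarrow> ('l \<Rightarrow> 'q::real_vector)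
                      \<Rightarrow> ('q \<Rightarrow> 'l) \<Rightarrow> 'l \<Rightarrow> 'q \<Rightarrow> complex" where
  "Khat \<theta> br J q j \<zeta> \<phi> =
     exp (\<i> * complex_of_real (\<theta> \<zeta> (j (\<phi> - q \<zeta>)))
          - (1/2) * Omega_of br J j (\<phi> - q \<zeta>) (\<phi> - q \<zeta>))"

end

theory Submission
  imports Defs "HOL-Analysis.Analysis"
begin
definition tev :: "(complex \<times> 'a::real_inner) list \<Rightarrow> 'a \<Rightarrow> complex" where
  "tev ps x = sum_list (map (\<lambda>(c,k). c * exp (\<i> * of_real (k \<bullet> x))) ps)"

definition trig :: "('a::real_inner \<Rightarrow> complex) \<Rightarrow> bool" where
  "trig t \<longleftrightarrow> (\<exists>ps. \<forall>x. t x = tev ps x)"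

lemma tev_Nil[simp]: "tev [] x = 0" by (simp add: tev_def)
lemma tev_Cons[simp]: "tev ((c,k)#ps) x = c * exp (\<i> * of_real (k \<bullet> x)) + tev ps x"
  by (simp add: tev_def)
lemma tev_append[simp]: "tev (ps@qs) x = tev ps x + tev qs x" by (simp add: tev_def)

lemma tev_scale: "tev (map (\<lambda>(c,k). (a*c, k)) ps) x = a * tev ps x"
  by (induction ps) (auto simp: algebra_simps)

lemma tev_mult1: "tev (map (\<lambda>(d,l). (c*d, k+l)) qs) x = c * exp (\<i> * of_real (k \<bullet> x)) * tev qs x"
  by (induction qs) (auto simp: algebra_simps inner_add_left exp_add)

lemma tev_mult: "tev (concat (map (\<lambda>(c,k). map (\<lambda>(d,l). (c*d, k+l)) qs) ps)) x = tev ps x * tev qs x"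
  by (induction ps) (auto simp: tev_mult1 algebra_simps)

lemma trig_const: "trig (\<lambda>x. c)"
  unfolding trig_def by (rule exI[of _ "[(c,0)]"]) simp

lemma trig_exp: "trig (\<lambda>x. exp (\<i> * of_real (k \<bullet> x)))"
  unfolding trig_def by (rule exI[of _ "[(1,k)]"]) simp

lemma trig_add: "trig f \<Longrightarrow> trig g \<Longrightarrow> trig (\<lambda>x. f x + g x)"
  unfolding trig_def by (metis tev_append)

lemma trig_mult: "trig f \<Longrightarrow> trig g \<Longrightarrow> trig (\<lambda>x. f x * g x)"
  unfolding trig_def by (metis tev_mult)

lemma trig_cmult: "trig f \<Longrightarrow> trig (\<lambda>x. a * f x)"
  using trig_mult[OF trig_const] by blast

lemma trig_sum: "finite I \<Longrightarrow> (\<And>i. i \<in> I \<Longrightarrow> trig (f i)) \<Longrightarrow> trig (\<lambda>x. \<Sum>i\<in>I. f i x)"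
  by (induction I rule: finite_induct) (auto intro: trig_add trig_const)

lemma trig_cos: "trig (\<lambda>x. of_real (cos (c * (x \<bullet> b))))"
proof -
  have "of_real (cos (c * (x \<bullet> b))) = (1/2) * exp (\<i> * of_real ((c *\<^sub>R b) \<bullet> x)) + (1/2) * exp (\<i> * of_real (((-c) *\<^sub>R b) \<bullet> x))" for x
    by (simp add: cos_of_real[symmetric] cos_exp_eq inner_commute field_simps)
  then show ?thesis
    by (simp only: ) (intro trig_add trig_cmult trig_exp)
qed

lemma trig_sin: "trig (\<lambda>x. of_real (sin (c * (x \<bullet> b))))"
proof -
  have "of_real (sin (c * (x \<bullet> b))) = (1/(2*\<i>)) * exp (\<i> * of_real ((c *\<^sub>R b) \<bullet> x)) + (-1/(2*\<i>)) * exp (\<i> * of_real (((-c) *\<^sub>R b) \<bullet> x))" for x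
    by (simp add: sin_of_real[symmetric] sin_exp_eq inner_commute field_simps)
  then show ?thesis
    by (simp only: ) (intro trig_add trig_cmult trig_exp)
qed

definition tphi :: "real \<Rightarrow> 'a::euclidean_space \<Rightarrow> 'a \<times> 'a" where
  "tphi c x = ((\<Sum>b\<in>Basis. cos (c * (x \<bullet> b)) *\<^sub>R b), (\<Sum>b\<in>Basis. sin (c * (x \<bullet> b)) *\<^sub>R b))"

lemma tphi_sum: "tphi c x = (\<Sum>b\<in>Basis. cos (c * (x \<bullet> b)) *\<^sub>R (b,0) + sin (c * (x \<bullet> b)) *\<^sub>R (0,b))"
  unfolding tphi_def by (simp add: prod_eq_iff fst_sum snd_sum)

lemma trig_rpoly:
  fixes r :: "'a::euclidean_space \<times> 'a \<Rightarrow> real"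
  assumes "real_polynomial_function r"
  shows "trig (\<lambda>x. of_real (r (tphi c x)))"
  using assms
proof induction
  case (linear f)
  then have lf: "linear f" by (rule bounded_linear.linear)
  have "f (tphi c x) = (\<Sum>b\<in>Basis. cos (c * (x \<bullet> b)) * f (b,0) + sin (c * (x \<bullet> b)) * f (0,b))" for x
    unfolding tphi_sum linear_sum[OF lf] linear_add[OF lf] linear_scale[OF lf] by simp
  then have eq: "(of_real (f (tphi c x)) :: complex) = (\<Sum>b\<in>Basis. of_real (f (b,0)) * of_real (cos (c * (x \<bullet> b))) + of_real (f (0,b)) * of_real (sin (c * (x \<bullet> b))))" for x
    by (simp add: mult.commute)
  show ?case
    unfolding eq by (intro trig_sum finite_Basis trig_add trig_cmult trig_cos trig_sin)
next
  case (const c)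
  then show ?case by (rule trig_const)
next
  case (add f g)
  then show ?case by (simp add: trig_add)
next
  case (mult f g)
  then show ?case by (simp add: trig_mult)
qed

lemma trig_poly:
  fixes p :: "'a::euclidean_space \<times> 'a \<Rightarrow> complex"
  assumes "polynomial_function p"
  shows "trig (\<lambda>x. p (tphi c x))"
proof -
  have "real_polynomial_function (Re \<circ> p)" "real_polynomial_function (Im \<circ> p)"
    using assms bounded_linear_Re bounded_linear_Im unfolding polynomial_function_def by blast+
  then have "trig (\<lambda>x. of_real ((Re \<circ> p) (tphi c x)) + \<i> * of_real ((Im \<circ> p) (tphi c x)))"
    by (intro trig_add trig_cmult trig_rpoly)
  then show ?thesis by (simp add: complex_eq[symmetric])
qed

lemma coord_sum: "(b::'a::euclidean_space) \<in> Basis \<Longrightarrow> (\<Sum>b'\<in>Basis. f b' *\<^sub>R b') \<bullet> b = f b"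
  by (simp add: inner_sum_left inner_Basis if_distrib cong: if_cong)
lemma tphi_fst: "b \<in> Basis \<Longrightarrow> fst (tphi c x) \<bullet> b = cos (c * (x \<bullet> b))"
  unfolding tphi_def fst_conv by (rule coord_sum)
lemma tphi_snd: "b \<in> Basis \<Longrightarrow> snd (tphi c x) \<bullet> b = sin (c * (x \<bullet> b))"
  unfolding tphi_def snd_conv by (rule coord_sum)
lemma tphi_eq: "tphi c x = tphi c y \<longleftrightarrow> (\<forall>b\<in>Basis. sin (c * (x \<bullet> b)) = sin (c * (y \<bullet> b)) \<and> cos (c * (x \<bullet> b)) = cos (c * (y \<bullet> b)))"
  (is "?L \<longleftrightarrow> ?R")
proof
  assume L: ?L
  show ?R
  proof
    fix b :: 'a assume b: "b \<in> Basis"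
    show "sin (c * (x \<bullet> b)) = sin (c * (y \<bullet> b)) \<and> cos (c * (x \<bullet> b)) = cos (c * (y \<bullet> b))"
      using tphi_fst[OF b, of c x] tphi_fst[OF b, of c y] tphi_snd[OF b, of c x] tphi_snd[OF b, of c y] L by simp
  qed
next
  assume R: ?R
  have "(\<Sum>b\<in>Basis. cos (c * (x \<bullet> b)) *\<^sub>R b) = (\<Sum>b\<in>Basis. cos (c * (y \<bullet> b)) *\<^sub>R b)"
    by (rule sum.cong) (use R in auto)
  moreover have "(\<Sum>b\<in>Basis. sin (c * (x \<bullet> b)) *\<^sub>R b) = (\<Sum>b\<in>Basis. sin (c * (y \<bullet> b)) *\<^sub>R b)"
    by (rule sum.cong) (use R in auto)
  ultimately show ?L unfolding tphi_def by simp
qed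

lemma continuous_tphi: "continuous_on UNIV (tphi c)"
  unfolding tphi_def by (intro continuous_intros)

lemma B0: fixes P t r :: real assumes P: "P > 0" and h: "\<bar>r - t / (2 * P)\<bar> \<le> 1/2" shows "\<bar>2 * P * r - t\<bar> \<le> P"
proof -
  have "2 * P * r - t = 2 * P * (r - t / (2 * P))" using P by (simp add: field_simps)
  then have "\<bar>2 * P * r - t\<bar> = 2 * P * \<bar>r - t / (2 * P)\<bar>" using P by (simp add: abs_mult)
  also have "\<dots> \<le> 2 * P * (1/2)" using P h by (intro mult_left_mono) auto
  finally show ?thesis by simp
qed

lemma torus_approx:
  fixes u :: "'a::euclidean_space \<Rightarrow> complex"
  assumes cont: "continuous_on UNIV u" and P: "P > 0"
    and bd: "\<And>x b. b \<in> Basis \<Longrightarrow> \<bar>x \<bullet> b\<bar> = P \<Longrightarrow> u x = 0"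
    and d: "\<delta> > 0"
  obtains t where "trig t" "\<And>x. x \<in> cbox (-(P *\<^sub>R One)) (P *\<^sub>R One) \<Longrightarrow> cmod (u x - t x) < \<delta>"
     "\<And>x. \<exists>y\<in>cbox (-(P *\<^sub>R One)) (P *\<^sub>R One). t x = t y"
proof -
  define S where "S = cbox (-(P *\<^sub>R One)) (P *\<^sub>R One :: 'a)"
  define c where "c = pi / P"
  define \<Phi> where "\<Phi> = (tphi c :: 'a \<Rightarrow> 'a \<times> 'a)"
  define T where "T = \<Phi> ` S"
  have memS: "x \<in> S \<longleftrightarrow> (\<forall>b\<in>Basis. -P \<le> x \<bullet> b \<and> x \<bullet> b \<le> P)" for x
    by (auto simp: S_def mem_box)
  have cpos: "c > 0" using P by (simp add: c_def)
  have K2: "u x = u y" if xS: "x \<in> S" and yS: "y \<in> S" and e: "\<Phi> x = \<Phi> y" for x y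
  proof (cases "x = y")
    case True then show ?thesis by simp
  next
    case False
    then obtain b where b: "b \<in> Basis" "x \<bullet> b \<noteq> y \<bullet> b" by (metis euclidean_eqI)
    from e b(1) have "sin (c * (x \<bullet> b)) = sin (c * (y \<bullet> b)) \<and> cos (c * (x \<bullet> b)) = cos (c * (y \<bullet> b))"
      by (auto simp: \<Phi>_def tphi_eq)
    then obtain n :: int where n: "c * (x \<bullet> b) = c * (y \<bullet> b) + 2 * pi * n"
      by (auto simp: sin_cos_eq_iff)
    have "x \<bullet> b = y \<bullet> b + 2 * P * n"
    proof -
      have "c * (x \<bullet> b) = c * (y \<bullet> b + 2 * P * n)" using n P by (simp add: c_def field_simps)
      then show ?thesis using cpos by simp
    qed
    then have xy: "x \<bullet> b - y \<bullet> b = 2 * (P * n)" by simp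
    have n0: "n \<noteq> 0" using b(2) xy by auto
    have bx: "-P \<le> x \<bullet> b" "x \<bullet> b \<le> P" "-P \<le> y \<bullet> b" "y \<bullet> b \<le> P"
      using xS yS b(1) memS by auto
    have "P * n \<ge> P \<or> P * n \<le> -P"
    proof (cases "n > 0")
      case True
      then have "P * n \<ge> P * 1" using P by (intro mult_left_mono) auto
      then show ?thesis by simp
    next
      case False
      then have "n \<le> -1" using n0 by auto
      then have "P * n \<le> P * (-1)" using P by (intro mult_left_mono) auto
      then show ?thesis by simp
    qed
    then have "\<bar>x \<bullet> b\<bar> = P \<and> \<bar>y \<bullet> b\<bar> = P" using xy bx by arith
    then have "u x = 0 \<and> u y = 0" using bd b(1) by blast
    then show ?thesis by simp
  qed
  have K3: "\<exists>y\<in>S. \<Phi> y = \<Phi> x" for x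
  proof -
    define w where "w = (\<lambda>t. t - 2 * P * of_int (round (t / (2 * P))))"
    define y where "y = (\<Sum>b\<in>Basis. w (x \<bullet> b) *\<^sub>R b)"
    have yb: "y \<bullet> b = w (x \<bullet> b)" if "b \<in> Basis" for b
      using that by (simp add: y_def coord_sum)
    have wb: "-P \<le> w t \<and> w t \<le> P" for t
    proof -
      have "\<bar>of_int (round (t / (2 * P))) - t / (2 * P)\<bar> \<le> 1/2" by (rule of_int_round_abs_le)
      then have "\<bar>2 * P * of_int (round (t / (2 * P))) - t\<bar> \<le> P"
        by (rule B0[OF P])
      then show ?thesis by (auto simp: w_def abs_le_iff)
    qed
    have "y \<in> S" using wb yb memS by auto
    moreover have "\<Phi> y = \<Phi> x"
      unfolding \<Phi>_def tphi_eq
    proof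
      fix b :: 'a assume b: "b \<in> Basis"
      have "c * (y \<bullet> b) = c * (x \<bullet> b) + 2 * pi * of_int (- round ((x \<bullet> b) / (2 * P)))"
        using P by (simp add: yb[OF b] w_def c_def right_diff_distrib)
      then show "sin (c * (y \<bullet> b)) = sin (c * (x \<bullet> b)) \<and> cos (c * (y \<bullet> b)) = cos (c * (x \<bullet> b))"
        using sin_cos_eq_iff by blast
    qed
    ultimately show ?thesis by blast
  qed
  define v where "v = (\<lambda>z. u (inv_into S \<Phi> z))"
  have vPhi: "v (\<Phi> x) = u x" if "x \<in> S" for x
  proof -
    have "inv_into S \<Phi> (\<Phi> x) \<in> S" "\<Phi> (inv_into S \<Phi> (\<Phi> x)) = \<Phi> x"
      using that by (auto intro: inv_into_into f_inv_into_f)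
    then show ?thesis unfolding v_def by (intro K2 that)
  qed
  have cS: "compact S" by (simp add: S_def)
  have cPhi: "continuous_on S \<Phi>" unfolding \<Phi>_def by (rule continuous_on_subset[OF continuous_tphi]) auto
  have cT: "compact T" unfolding T_def by (rule compact_continuous_image[OF cPhi cS])
  have qm: "quotient_map (top_of_set S) (top_of_set T) \<Phi>"
    by (rule continuous_imp_quotient_map)
      (use cS cPhi in \<open>auto simp: compact_space_def Hausdorff_space_subtopology T_def continuous_map_in_subtopology\<close>)
  have "continuous_on S (v \<circ> \<Phi>)"
    by (rule continuous_on_eq[OF continuous_on_subset[OF cont]]) (auto simp: vPhi)
  then have "continuous_map (top_of_set S) euclidean (v \<circ> \<Phi>)" by simp
  then have "continuous_map (top_of_set T) euclidean v"
    by (rule continuous_compose_quotient_map[OF qm])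
  then have cv: "continuous_on T v" by simp
  obtain p where p: "polynomial_function p" "\<And>z. z \<in> T \<Longrightarrow> norm (v z - p z) < \<delta>"
    using Stone_Weierstrass_polynomial_function[OF cT cv d] by blast
  show ?thesis
  proof (rule that[of "\<lambda>x. p (\<Phi> x)"])
    show "trig (\<lambda>x. p (\<Phi> x))" unfolding \<Phi>_def by (rule trig_poly[OF p(1)])
    show "cmod (u x - p (\<Phi> x)) < \<delta>" if "x \<in> cbox (-(P *\<^sub>R One)) (P *\<^sub>R One)" for x
      using p(2)[of "\<Phi> x"] vPhi[of x] that by (auto simp: S_def T_def)
    show "\<exists>y\<in>cbox (-(P *\<^sub>R One)) (P *\<^sub>R One). p (\<Phi> x) = p (\<Phi> y)" for x
    proof -
      obtain y where "y \<in> S" "\<Phi> y = \<Phi> x" using K3[of x] by blast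
      then show ?thesis by (intro bexI[of _ y]) (auto simp: S_def)
    qed
  qed
qed

lemma bil_rlin: "bilinear br \<Longrightarrow> linear (br x)"
  by (simp add: bilinear_def)
lemma bil_llin: "bilinear br \<Longrightarrow> linear (\<lambda>x. br x y)"
  by (simp add: bilinear_def)

lemma subspace_Mker: "bilinear br \<Longrightarrow> subspace (Mker br)"
  unfolding subspace_def Mker_def
  by (auto simp: linear_add[OF bil_rlin] linear_scale[OF bil_rlin] linear_0[OF bil_rlin])

lemma freq:
  fixes br :: "'l::euclidean_space \<Rightarrow> 'l \<Rightarrow> real" and q :: "'l \<Rightarrow> 'q::euclidean_space" and j :: "'q \<Rightarrow> 'l"
  assumes br_bilin: "bilinear br"
    and MN_sum: "\<And>\<tau>. \<exists>m n. m \<in> Mker br \<and> n \<in> Nker br \<and> \<tau> = m + n"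
    and q_ker: "\<And>\<tau>. q \<tau> = 0 \<longleftrightarrow> \<tau> \<in> Mker br"
    and j_lin: "linear j"
    and j_sect: "\<And>\<phi>. q (j \<phi>) = \<phi>"
  shows "\<exists>m\<in>Mker br. \<forall>\<phi>. br m (j \<phi>) = k \<bullet> \<phi>"
proof -
  define F where "F = (\<lambda>m. \<Sum>b\<in>Basis. br m (j b) *\<^sub>R b)"
  have linF: "linear F"
  proof (rule linearI)
    fix x y :: 'l and r :: real
    show "F (x + y) = F x + F y"
      by (simp add: F_def linear_add[OF bil_llin[OF br_bilin]] scaleR_add_left sum.distrib)
    show "F (r *\<^sub>R x) = r *\<^sub>R F x"
      by (simp add: F_def linear_scale[OF bil_llin[OF br_bilin]] scaleR_sum_right)
  qed
  have Fphi: "F m \<bullet> \<phi> = br m (j \<phi>)" for m \<phi>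
  proof -
    have l: "linear (\<lambda>\<phi>. br m (j \<phi>))" using linear_compose[OF j_lin bil_rlin[OF br_bilin]] by (simp add: o_def)
    have "br m (j \<phi>) = br m (j (\<Sum>b\<in>Basis. (\<phi> \<bullet> b) *\<^sub>R b))" by (simp add: euclidean_representation)
    also have "\<dots> = (\<Sum>b\<in>Basis. (\<phi> \<bullet> b) * br m (j b))"
      by (simp add: linear_sum[OF l] linear_scale[OF l])
    also have "\<dots> = (\<Sum>b\<in>Basis. br m (j b) * (b \<bullet> \<phi>))"
      by (intro sum.cong) (simp_all add: inner_commute)
    also have "\<dots> = F m \<bullet> \<phi>" by (simp add: F_def inner_sum_left)
    finally show ?thesis by simp
  qed
  define S where "S = F ` Mker br"
  have subS: "subspace S" unfolding S_def by (rule real_vector.linear_subspace_image[OF linF subspace_Mker[OF br_bilin]])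
  have "k \<in> S"
  proof (rule ccontr)
    assume "k \<notin> S"
    then have "span S \<noteq> UNIV" using span_eq_iff[of S] subS by (metis UNIV_I)
    then have "dim S \<noteq> DIM('q)" using dim_eq_full[of S] by simp
    moreover have "dim S \<le> DIM('q)" by (rule dim_subset_UNIV)
    ultimately have dS: "dim S < DIM('q)" by simp
    obtain w where w: "w \<noteq> 0" "\<And>y. y \<in> span S \<Longrightarrow> orthogonal w y"
      using orthogonal_to_subspace_exists[OF dS] by blast
    have "br m (j w) = 0" if "m \<in> Mker br" for m
    proof -
      have "F m \<in> span S" using that by (auto simp: S_def intro: span_base)
      then have "w \<bullet> F m = 0" using w(2) by (simp add: orthogonal_def)
      then show ?thesis by (simp add: Fphi[symmetric] inner_commute)
    qed
    moreover have "br n (j w) = 0" if "n \<in> Nker br" for n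
      using that by (simp add: Nker_def)
    ultimately have "br \<xi> (j w) = 0" for \<xi>
    proof -
      assume h1: "\<And>m. m \<in> Mker br \<Longrightarrow> br m (j w) = 0" and h2: "\<And>n. n \<in> Nker br \<Longrightarrow> br n (j w) = 0"
      obtain m n where "m \<in> Mker br" "n \<in> Nker br" "\<xi> = m + n" using MN_sum by blast
      then show ?thesis using h1 h2 linear_add[OF bil_llin[OF br_bilin], of m n "j w"] by simp
    qed
    then have "j w \<in> Mker br" by (simp add: Mker_def)
    then have "q (j w) = 0" using q_ker by blast
    then show False using w(1) j_sect by simp
  qed
  then obtain m where "m \<in> Mker br" "k = F m" by (auto simp: S_def)
  then show ?thesis using Fphi by (metis inner_commute)
qed

definition spanK :: "('l \<Rightarrow> 'q \<Rightarrow> complex) \<Rightarrow> ('q \<Rightarrow> complex) \<Rightarrow> bool" where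
  "spanK K v \<longleftrightarrow> (\<exists>Z a. finite Z \<and> (\<forall>\<phi>. v \<phi> = (\<Sum>\<zeta>\<in>Z. a \<zeta> * K \<zeta> \<phi>)))"

lemma spanK_0: "spanK K (\<lambda>\<phi>. 0)"
  unfolding spanK_def by (rule exI[of _ "{}"]) simp

lemma spanK_single: "spanK K (\<lambda>\<phi>. c * K \<zeta> \<phi>)"
  unfolding spanK_def by (rule exI[of _ "{\<zeta>}"], rule exI[of _ "\<lambda>_. c"]) simp

lemma spanK_add:
  assumes "spanK K v1" "spanK K v2" shows "spanK K (\<lambda>\<phi>. v1 \<phi> + v2 \<phi>)"
proof -
  obtain Z1 a1 where 1: "finite Z1" "\<And>\<phi>. v1 \<phi> = (\<Sum>\<zeta>\<in>Z1. a1 \<zeta> * K \<zeta> \<phi>)" using assms(1) spanK_def by metis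
  obtain Z2 a2 where 2: "finite Z2" "\<And>\<phi>. v2 \<phi> = (\<Sum>\<zeta>\<in>Z2. a2 \<zeta> * K \<zeta> \<phi>)" using assms(2) spanK_def by metis
  define a where "a = (\<lambda>\<zeta>. (if \<zeta> \<in> Z1 then a1 \<zeta> else 0) + (if \<zeta> \<in> Z2 then a2 \<zeta> else 0))"
  have "v1 \<phi> + v2 \<phi> = (\<Sum>\<zeta>\<in>Z1 \<union> Z2. a \<zeta> * K \<zeta> \<phi>)" for \<phi>
  proof -
    have "(\<Sum>\<zeta>\<in>Z1 \<union> Z2. a \<zeta> * K \<zeta> \<phi>) =
      (\<Sum>\<zeta>\<in>Z1 \<union> Z2. (if \<zeta> \<in> Z1 then a1 \<zeta> * K \<zeta> \<phi> else 0)) + (\<Sum>\<zeta>\<in>Z1 \<union> Z2. (if \<zeta> \<in> Z2 then a2 \<zeta> * K \<zeta> \<phi> else 0))"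
      unfolding sum.distrib[symmetric] by (rule sum.cong) (auto simp: a_def algebra_simps)
    also have "\<dots> = (\<Sum>\<zeta>\<in>(Z1 \<union> Z2) \<inter> Z1. a1 \<zeta> * K \<zeta> \<phi>) + (\<Sum>\<zeta>\<in>(Z1 \<union> Z2) \<inter> Z2. a2 \<zeta> * K \<zeta> \<phi>)"
      by (simp only: sum.inter_restrict[OF finite_UnI[OF 1(1) 2(1)]])
    also have "\<dots> = v1 \<phi> + v2 \<phi>"
      by (simp add: 1 2 Int_absorb1 Int_absorb2)
    finally show ?thesis by simp
  qed
  then show ?thesis unfolding spanK_def using 1(1) 2(1) by blast
qed

lemma tri_pw: "ennreal ((cmod (x - z))\<^sup>2) \<le> 2 * ennreal ((cmod (x - y))\<^sup>2) + 2 * ennreal ((cmod (y - z))\<^sup>2)"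
proof -
  have "cmod (x - z) \<le> cmod (x - y) + cmod (y - z)" using norm_triangle_ineq[of "x - y" "y - z"] by simp
  then have "(cmod (x - z))\<^sup>2 \<le> (cmod (x - y) + cmod (y - z))\<^sup>2" by (intro power_mono) auto
  also have "\<dots> \<le> 2 * (cmod (x - y))\<^sup>2 + 2 * (cmod (y - z))\<^sup>2"
  proof -
    have "(cmod (x - y) + cmod (y - z))\<^sup>2 + (cmod (x - y) - cmod (y - z))\<^sup>2 = 2 * (cmod (x - y))\<^sup>2 + 2 * (cmod (y - z))\<^sup>2"
      by (simp add: power2_eq_square algebra_simps)
    moreover have "0 \<le> (cmod (x - y) - cmod (y - z))\<^sup>2" by simp
    ultimately show ?thesis by linarith
  qed
  finally have "ennreal ((cmod (x - z))\<^sup>2) \<le> ennreal (2 * (cmod (x - y))\<^sup>2 + 2 * (cmod (y - z))\<^sup>2)"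
    by (rule ennreal_leI)
  also have "\<dots> = 2 * ennreal ((cmod (x - y))\<^sup>2) + 2 * ennreal ((cmod (y - z))\<^sup>2)"
    by (simp add: ennreal_plus ennreal_mult)
  finally show ?thesis .
qed

lemma tri:
  fixes x y z :: "'a \<Rightarrow> complex"
  assumes [measurable]: "x \<in> borel_measurable M" "y \<in> borel_measurable M" "z \<in> borel_measurable M"
  shows "(\<integral>\<^sup>+t. ennreal ((cmod (x t - z t))\<^sup>2) \<partial>M) \<le>
    2 * (\<integral>\<^sup>+t. ennreal ((cmod (x t - y t))\<^sup>2) \<partial>M) + 2 * (\<integral>\<^sup>+t. ennreal ((cmod (y t - z t))\<^sup>2) \<partial>M)"
proof -
  have "(\<integral>\<^sup>+t. ennreal ((cmod (x t - z t))\<^sup>2) \<partial>M) \<le>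
      (\<integral>\<^sup>+t. 2 * ennreal ((cmod (x t - y t))\<^sup>2) + 2 * ennreal ((cmod (y t - z t))\<^sup>2) \<partial>M)"
    by (intro nn_integral_mono tri_pw)
  also have "\<dots> = 2 * (\<integral>\<^sup>+t. ennreal ((cmod (x t - y t))\<^sup>2) \<partial>M) + 2 * (\<integral>\<^sup>+t. ennreal ((cmod (y t - z t))\<^sup>2) \<partial>M)"
    by (subst nn_integral_add) (measurable, simp add: nn_integral_cmult)
  finally show ?thesis .
qed

lemma Khat_cont:
  fixes \<theta> :: "'l::euclidean_space \<Rightarrow> 'l \<Rightarrow> real" and q :: "'l \<Rightarrow> 'q::euclidean_space"
  assumes theta_lin: "\<And>\<eta>. linear (\<theta> \<eta>)" and br_bilin: "bilinear br" and J_lin: "linear J" and j_lin: "linear j"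
  shows "continuous_on UNIV (Khat \<theta> br J q j \<zeta>)"
proof -
  have cb: "continuous_on UNIV (\<lambda>x. br (f x) (g x))" if "continuous_on UNIV f" "continuous_on UNIV g" for f g :: "'q \<Rightarrow> 'l"
    by (rule bilinear_continuous_on_compose[OF that br_bilin])
  have cl: "continuous_on UNIV (\<lambda>x. L (f x))" if "linear L" "continuous_on UNIV f" for L :: "'l \<Rightarrow> 'l" and f :: "'q \<Rightarrow> 'l"
    by (rule linear_continuous_on_compose[OF that(2,1)])
  have ct: "continuous_on UNIV (\<lambda>x. \<theta> \<zeta> (f x))" if "continuous_on UNIV f" for f :: "'q \<Rightarrow> 'l"
    by (rule linear_continuous_on_compose[OF that theta_lin])
  define v where "v = (\<lambda>x. j (x - q \<zeta>))"
  have cj: "continuous_on UNIV v" unfolding v_def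
    by (rule linear_continuous_on_compose[OF _ j_lin]) (intro continuous_intros)
  define T1 where "T1 = (\<lambda>x. \<theta> \<zeta> (v x))"
  define T2 where "T2 = (\<lambda>x. br (v x) (J (v x)))"
  define T3 where "T3 = (\<lambda>x. br (J (v x)) (v x))"
  define T4 where "T4 = (\<lambda>x. br (v x) (v x))"
  have c1: "continuous_on UNIV T1" unfolding T1_def by (rule ct[OF cj])
  have cJ: "continuous_on UNIV (\<lambda>x. J (v x))" by (rule cl[OF J_lin cj])
  have c2: "continuous_on UNIV T2" unfolding T2_def by (rule cb[OF cj cJ])
  have c3: "continuous_on UNIV T3" unfolding T3_def by (rule cb[OF cJ cj])
  have c4: "continuous_on UNIV T4" unfolding T4_def by (rule cb[OF cj cj])
  have eq: "Khat \<theta> br J q j \<zeta> = (\<lambda>x. exp (\<i> * of_real (T1 x) - 1/2 * (of_real (2 * (1/2 * T2 x - 1/2 * T3 x)) - \<i> * of_real (T4 x))))"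
    unfolding Khat_def Omega_of_def g_of_def omega_of_def T1_def T2_def T3_def T4_def v_def by (rule refl)
  show ?thesis unfolding eq
    by (intro continuous_intros c1 c2 c3 c4)
qed

lemma Khat_norm:
  "(cmod (Khat \<theta> br J q j \<zeta> \<phi>))\<^sup>2 = exp (- g_of br J (j (\<phi> - q \<zeta>)) (j (\<phi> - q \<zeta>)))"
proof -
  have "cmod (Khat \<theta> br J q j \<zeta> \<phi>) = exp (- g_of br J (j (\<phi> - q \<zeta>)) (j (\<phi> - q \<zeta>)) / 2)"
    unfolding Khat_def norm_exp_eq_Re by (simp add: Omega_of_def)
  then show ?thesis by (simp add: power2_eq_square exp_add[symmetric])
qed

lemma Khat_shift:
  fixes \<theta> :: "'l::euclidean_space \<Rightarrow> 'l \<Rightarrow> real" and q :: "'l \<Rightarrow> 'q::euclidean_space"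
  assumes br_bilin: "bilinear br"
    and theta_shift: "\<And>\<eta> \<xi> \<tau>. \<theta> (\<eta> + \<xi>) \<tau> = \<theta> \<eta> \<tau> + br \<xi> \<tau>"
    and q_lin: "linear q" and j_lin: "linear j" and qm: "q m = 0"
    and mk: "\<And>\<phi>. br m (j \<phi>) = k \<bullet> \<phi>"
  shows "exp (\<i> * of_real (k \<bullet> \<phi>)) * Khat \<theta> br J q j \<eta> \<phi> =
         exp (\<i> * of_real (br m (j (q \<eta>)))) * Khat \<theta> br J q j (\<eta> + m) \<phi>"
proof -
  have q1: "q (\<eta> + m) = q \<eta>" using qm linear_add[OF q_lin] by simp
  have b1: "br m (j (\<phi> - q \<eta>)) = k \<bullet> \<phi> - br m (j (q \<eta>))"
    using linear_diff[OF j_lin] linear_diff[OF bil_rlin[OF br_bilin]] mk by simp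
  define A where "A = \<i> * of_real (\<theta> \<eta> (j (\<phi> - q \<eta>))) - 1/2 * Omega_of br J j (\<phi> - q \<eta>) (\<phi> - q \<eta>)"
  have "Khat \<theta> br J q j (\<eta> + m) \<phi> = exp (A + \<i> * of_real (k \<bullet> \<phi>) - \<i> * of_real (br m (j (q \<eta>))))"
    unfolding Khat_def q1 theta_shift b1 A_def by (simp add: algebra_simps)
  moreover have "Khat \<theta> br J q j \<eta> \<phi> = exp A" unfolding Khat_def A_def by simp
  moreover have "exp (\<i> * of_real (br m (j (q \<eta>))) + (A + \<i> * of_real (k \<bullet> \<phi>) - \<i> * of_real (br m (j (q \<eta>)))))
      = exp (\<i> * of_real (br m (j (q \<eta>)))) * exp (A + \<i> * of_real (k \<bullet> \<phi>) - \<i> * of_real (br m (j (q \<eta>))))"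
    by (rule exp_add)
  moreover have "exp (A + \<i> * of_real (k \<bullet> \<phi>)) = exp A * exp (\<i> * of_real (k \<bullet> \<phi>))" by (rule exp_add)
  ultimately show ?thesis by (simp add: mult.commute)
qed

lemma stepA:
  fixes f :: "'a::euclidean_space \<Rightarrow> complex"
  assumes mu: "\<mu> = density lborel (\<lambda>_. ennreal \<kappa>)"
    and fm: "f \<in> borel_measurable \<mu>"
    and fin: "(\<integral>\<^sup>+x. ennreal ((cmod (f x))\<^sup>2) \<partial>\<mu>) < \<infinity>"
    and e: "e > 0"
  shows "\<exists>R>0. (\<integral>\<^sup>+x. ennreal ((cmod (f x - (if cmod (f x) \<le> R \<and> norm x \<le> R then f x else 0)))\<^sup>2) \<partial>\<mu>) < e"
proof -
  define u where "u = (\<lambda>n::nat. \<lambda>x. ennreal ((cmod (f x - (if cmod (f x) \<le> real n + 1 \<and> norm x \<le> real n + 1 then f x else 0)))\<^sup>2))"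
  have fm': "f \<in> borel_measurable lborel" using fm mu by simp
  have um: "u n \<in> borel_measurable \<mu>" for n
    unfolding u_def mu using fm' by measurable
  have wm: "(\<lambda>x. ennreal ((cmod (f x))\<^sup>2)) \<in> borel_measurable \<mu>"
    unfolding mu using fm' by measurable
  have bound: "AE x in \<mu>. u n x \<le> ennreal ((cmod (f x))\<^sup>2)" for n
    by (rule AE_I2) (auto simp: u_def)
  have lim: "AE x in \<mu>. (\<lambda>n. u n x) \<longlonglongrightarrow> 0"
  proof (rule AE_I2)
    fix x
    obtain N :: nat where N: "max (cmod (f x)) (norm x) \<le> real N" using real_arch_simple by blast
    have "\<forall>n\<ge>N. u n x = 0" using N by (auto simp: u_def)
    then have "eventually (\<lambda>n. u n x = 0) sequentially" by (auto simp: eventually_sequentially)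
    then show "(\<lambda>n. u n x) \<longlonglongrightarrow> 0" by (rule tendsto_eventually)
  qed
  have "(\<lambda>n. \<integral>\<^sup>+x. u n x \<partial>\<mu>) \<longlonglongrightarrow> (\<integral>\<^sup>+x. 0 \<partial>\<mu>)"
    by (rule nn_integral_dominated_convergence[OF um _ wm bound fin lim]) simp
  then have "(\<lambda>n. \<integral>\<^sup>+x. u n x \<partial>\<mu>) \<longlonglongrightarrow> 0" by simp
  then have "eventually (\<lambda>n. (\<integral>\<^sup>+x. u n x \<partial>\<mu>) < e) sequentially" using e by (rule order_tendstoD)
  then obtain n where "(\<integral>\<^sup>+x. u n x \<partial>\<mu>) < e" by (auto simp: eventually_sequentially)
  then show ?thesis unfolding u_def by (intro exI[of _ "real n + 1"]) auto
qed

definition clip :: "real \<Rightarrow> complex \<Rightarrow> complex" where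
  "clip K z = z * of_real (K / max K (cmod z))"

lemma clip_cont: "K > 0 \<Longrightarrow> continuous_on UNIV (clip K)"
  unfolding clip_def by (intro continuous_intros) auto

lemma clip_id: "K > 0 \<Longrightarrow> cmod z \<le> K \<Longrightarrow> clip K z = z"
  by (simp add: clip_def max_def)

lemma clip_bound: assumes "K > 0" shows "cmod (clip K z) \<le> K"
proof -
  have "\<bar>K / max K (cmod z)\<bar> = K / max K (cmod z)" using assms by (intro abs_of_nonneg) auto
  then have "cmod (clip K z) = cmod z * (K / max K (cmod z))" unfolding clip_def norm_mult norm_of_real by simp
  also have "\<dots> \<le> K"
  proof (cases "cmod z \<le> K")
    case True then show ?thesis using assms by (simp add: max_def)
  next
    case False then show ?thesis using assms by (simp add: max_def)
  qed
  finally show ?thesis .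
qed

lemma AE_lebesgue_to_mu:
  assumes mu: "\<mu> = density lborel (\<lambda>_. ennreal \<kappa>)" and "AE x in lebesgue. P x"
  shows "AE x in \<mu>. P x"
proof -
  have "AE x in lborel. P x" using assms(2) by (simp add: AE_completion_iff)
  then show ?thesis unfolding mu by (subst AE_density) auto
qed

lemma mu_cball_finite:
  assumes mu: "\<mu> = density lborel (\<lambda>_. ennreal \<kappa>)"
  shows "emeasure \<mu> (cball (0::'a::euclidean_space) r) < \<infinity>"
proof -
  have "emeasure \<mu> (cball (0::'a) r) = (\<integral>\<^sup>+x. ennreal \<kappa> * indicator (cball (0::'a) r) x \<partial>lborel)"
    unfolding mu by (subst emeasure_density) (auto simp: mult.commute)
  also have "\<dots> = ennreal \<kappa> * emeasure lborel (cball (0::'a) r)"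
    by (simp add: nn_integral_cmult_indicator)
  also have "\<dots> < \<infinity>" using emeasure_bounded_finite[of "cball (0::'a) r"]
    by (simp add: ennreal_mult_less_top)
  finally show ?thesis .
qed

lemma stepB:
  fixes f :: "'a::euclidean_space \<Rightarrow> complex"
  assumes mu: "\<mu> = density lborel (\<lambda>_. ennreal \<kappa>)"
    and fm: "f \<in> borel_measurable \<mu>"
    and K: "K > 0" and fb: "\<And>x. cmod (f x) \<le> K" and fs: "\<And>x. norm x > R \<Longrightarrow> f x = 0"
    and e: "e > 0"
  shows "\<exists>h. continuous_on UNIV h \<and> (\<forall>x. norm x > R + 1 \<longrightarrow> h x = 0) \<and>
            (\<integral>\<^sup>+x. ennreal ((cmod (f x - h x))\<^sup>2) \<partial>\<mu>) < e"
proof -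
  have fm': "f \<in> borel_measurable lborel" using fm mu by simp
  then have "f \<in> borel_measurable lebesgue" by (rule measurable_completion)
  then have "f measurable_on UNIV" by (rule lebesgue_measurable_imp_measurable_on) simp
  then obtain N g where N: "negligible N" and gc: "\<And>n. continuous_on UNIV (g n)"
    and gl: "\<And>x. x \<notin> N \<Longrightarrow> (\<lambda>n. g n x) \<longlonglongrightarrow> f x"
    unfolding measurable_on_def by auto
  have AEN: "AE x in \<mu>. x \<notin> N"
    using N by (intro AE_lebesgue_to_mu[OF mu]) (simp add: negligible_iff_null_sets AE_not_in)
  define ch where "ch = (\<lambda>x::'a. max 0 (min 1 (R + 1 - norm x)))"
  define h where "h = (\<lambda>n x. of_real (ch x) * clip K (g n x))"
  have hc: "continuous_on UNIV (h n)" for n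
  proof -
    have "continuous_on UNIV (clip K \<circ> g n)"
      by (rule continuous_on_compose[OF gc]) (rule continuous_on_subset[OF clip_cont[OF K]], simp)
    then show ?thesis unfolding h_def ch_def o_def by (intro continuous_intros)
  qed
  have hs: "norm x > R + 1 \<Longrightarrow> h n x = 0" for n x by (simp add: h_def ch_def)
  define u where "u = (\<lambda>n x. ennreal ((cmod (f x - h n x))\<^sup>2))"
  define w where "w = (\<lambda>x. ennreal ((2 * K)\<^sup>2) * indicator (cball (0::'a) (R + 1)) x)"
  have hm: "h n \<in> borel_measurable lborel" for n
    using borel_measurable_continuous_onI[OF hc[of n]] by simp
  have um: "u n \<in> borel_measurable \<mu>" for n
    unfolding u_def mu using fm' hm[of n] by measurable
  have [measurable]: "cball (0::'a) (R + 1) \<in> sets borel" by simp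
  have wm: "w \<in> borel_measurable \<mu>" unfolding w_def mu by measurable
  have bound: "AE x in \<mu>. u n x \<le> w x" for n
  proof (rule AE_I2)
    fix x
    show "u n x \<le> w x"
    proof (cases "norm x > R + 1")
      case True
      then show ?thesis using fs[of x] hs[of x n] by (simp add: u_def w_def)
    next
      case False
      have "cmod (h n x) \<le> 1 * K"
        unfolding h_def norm_mult
        by (intro mult_mono clip_bound K) (auto simp: ch_def)
      then have "cmod (f x - h n x) \<le> 2 * K" using fb[of x] norm_triangle_ineq4[of "f x" "h n x"] by simp
      then have "(cmod (f x - h n x))\<^sup>2 \<le> (2 * K)\<^sup>2" by (intro power_mono) auto
      then show ?thesis using False by (simp add: u_def w_def)
    qed
  qed
  have wfin: "(\<integral>\<^sup>+x. w x \<partial>\<mu>) < \<infinity>"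
  proof -
    have "cball (0::'a) (R + 1) \<in> sets \<mu>" by (simp add: mu)
    then have "(\<integral>\<^sup>+x. w x \<partial>\<mu>) = ennreal ((2 * K)\<^sup>2) * emeasure \<mu> (cball 0 (R + 1))"
      unfolding w_def by (rule nn_integral_cmult_indicator)
    then show ?thesis using mu_cball_finite[OF mu, of "R + 1"] by (simp add: ennreal_mult_less_top)
  qed
  have lim: "AE x in \<mu>. (\<lambda>n. u n x) \<longlonglongrightarrow> 0"
    using AEN
  proof eventually_elim
    fix x assume "x \<notin> N"
    then have gx: "(\<lambda>n. g n x) \<longlonglongrightarrow> f x" by (rule gl)
    have "isCont (clip K) (f x)" using clip_cont[OF K] by (simp add: continuous_on_eq_continuous_at)
    then have "(\<lambda>n. clip K (g n x)) \<longlonglongrightarrow> clip K (f x)" using gx by (rule isCont_tendsto_compose)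
    then have "(\<lambda>n. clip K (g n x)) \<longlonglongrightarrow> f x" using clip_id[OF K fb] by simp
    then have "(\<lambda>n. h n x) \<longlonglongrightarrow> of_real (ch x) * f x" unfolding h_def by (intro tendsto_intros)
    moreover have "of_real (ch x) * f x = f x"
      using fs[of x] by (cases "norm x > R") (auto simp: ch_def)
    ultimately have "(\<lambda>n. h n x) \<longlonglongrightarrow> f x" by simp
    then have "(\<lambda>n. (cmod (f x - h n x))\<^sup>2) \<longlonglongrightarrow> (cmod (f x - f x))\<^sup>2"
      by (intro tendsto_intros)
    then have "(\<lambda>n. ennreal ((cmod (f x - h n x))\<^sup>2)) \<longlonglongrightarrow> ennreal 0"
      by (intro tendsto_ennrealI) simp
    then show "(\<lambda>n. u n x) \<longlonglongrightarrow> 0" by (simp add: u_def)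
  qed
  have "(\<lambda>n. \<integral>\<^sup>+x. u n x \<partial>\<mu>) \<longlonglongrightarrow> (\<integral>\<^sup>+x. 0 \<partial>\<mu>)"
    by (rule nn_integral_dominated_convergence[OF um _ wm bound wfin lim]) simp
  then have "(\<lambda>n. \<integral>\<^sup>+x. u n x \<partial>\<mu>) \<longlonglongrightarrow> 0" by simp
  then have "eventually (\<lambda>n. (\<integral>\<^sup>+x. u n x \<partial>\<mu>) < e) sequentially" using e by (rule order_tendstoD)
  then obtain n where "(\<integral>\<^sup>+x. u n x \<partial>\<mu>) < e" by (auto simp: eventually_sequentially)
  then show ?thesis using hc[of n] hs[of _ n] unfolding u_def by blast
qed

lemma stepC:
  fixes h E :: "'a::euclidean_space \<Rightarrow> complex" and \<mu> :: "'a measure"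
  assumes mu: "\<mu> = density lborel (\<lambda>_. ennreal \<kappa>)"
    and hc: "continuous_on UNIV h" and hs: "\<And>x. norm x > R \<Longrightarrow> h x = 0"
    and Ec: "continuous_on UNIV E" and E0: "\<And>x. E x \<noteq> 0"
    and EI: "(\<integral>\<^sup>+x. ennreal ((cmod (E x))\<^sup>2) \<partial>\<mu>) < \<infinity>"
    and e: "e > 0"
  shows "\<exists>t. trig t \<and> (\<integral>\<^sup>+x. ennreal ((cmod (h x - E x * t x))\<^sup>2) \<partial>\<mu>) < ennreal e"
proof -
  define G where "G = (\<lambda>x. (cmod (E x))\<^sup>2)"
  define I where "I = (\<integral>\<^sup>+x. ennreal (G x) \<partial>\<mu>)"
  have Gc: "continuous_on UNIV G" unfolding G_def by (intro continuous_intros Ec)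
  have Gm[measurable]: "G \<in> borel_measurable borel" using borel_measurable_continuous_onI[OF Gc] .
  have G0: "G x \<ge> 0" for x by (simp add: G_def)
  have Ifin: "I < \<infinity>" using EI by (simp add: I_def G_def)
  define u where "u = (\<lambda>x. h x / E x)"
  have uc: "continuous_on UNIV u" unfolding u_def using hc Ec E0 by (intro continuous_intros) auto
  have us: "norm x > R \<Longrightarrow> u x = 0" for x using hs by (simp add: u_def)
  obtain M where M: "M > 0" "\<And>y. y \<in> u ` cball 0 R \<Longrightarrow> norm y \<le> M"
    using bounded_pos compact_imp_bounded[OF compact_continuous_image[OF continuous_on_subset[OF uc] compact_cball]]
    by (metis subset_UNIV)
  have uM: "cmod (u x) \<le> M" for x
  proof (cases "norm x \<le> R")
    case True then show ?thesis using M(2)[of "u x"] by auto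
  next
    case False then show ?thesis using us[of x] M(1) by simp
  qed
  define cube where "cube = (\<lambda>n::nat. cbox (-(real n *\<^sub>R One)) (real n *\<^sub>R One :: 'a))"
  have cube_mem: "x \<in> cube n" if xn: "norm x \<le> real n" for x n
  proof -
    have "\<bar>x \<bullet> b\<bar> \<le> real n" if b: "b \<in> Basis" for b
      using Basis_le_norm[OF b, of x] xn by linarith
    then show ?thesis unfolding cube_def mem_box by (force simp: abs_le_iff)
  qed
  have [measurable]: "cube n \<in> sets borel" for n by (simp add: cube_def)
  define tl where "tl = (\<lambda>n. \<integral>\<^sup>+x. ennreal (G x) * indicator (- cube n) x \<partial>\<mu>)"
  have tl0: "tl \<longlonglongrightarrow> 0"
  proof -
    have "(\<lambda>n. \<integral>\<^sup>+x. ennreal (G x) * indicator (- cube n) x \<partial>\<mu>) \<longlonglongrightarrow> (\<integral>\<^sup>+x. 0 \<partial>\<mu>)"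
    proof (rule nn_integral_dominated_convergence[where w="\<lambda>x. ennreal (G x)"])
      show "(\<lambda>x. ennreal (G x) * indicator (- cube i) x) \<in> borel_measurable \<mu>" for i
        unfolding mu by measurable
      show "(\<lambda>x. 0) \<in> borel_measurable \<mu>" by simp
      show "(\<lambda>x. ennreal (G x)) \<in> borel_measurable \<mu>" unfolding mu by measurable
      show "AE x in \<mu>. ennreal (G x) * indicator (- cube j) x \<le> ennreal (G x)" for j
        by (rule AE_I2) (auto simp: indicator_def)
      show "(\<integral>\<^sup>+x. ennreal (G x) \<partial>\<mu>) < \<infinity>" using Ifin by (simp add: I_def)
      show "AE x in \<mu>. (\<lambda>i. ennreal (G x) * indicator (- cube i) x) \<longlonglongrightarrow> 0"
      proof (rule AE_I2)
        fix x :: 'a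
        obtain N :: nat where N: "norm x \<le> real N" using real_arch_simple by blast
        have "\<forall>n\<ge>N. ennreal (G x) * indicator (- cube n) x = 0"
          using N cube_mem by (auto simp: indicator_def)
        then have "eventually (\<lambda>n. ennreal (G x) * indicator (- cube n) x = 0) sequentially"
          by (auto simp: eventually_sequentially)
        then show "(\<lambda>n. ennreal (G x) * indicator (- cube n) x) \<longlonglongrightarrow> 0" by (rule tendsto_eventually)
      qed
    qed
    then show ?thesis by (simp add: tl_def)
  qed
  have "ennreal (e / (4 * (M + 1)\<^sup>2)) > 0" using e M by simp
  then have ev: "eventually (\<lambda>n. tl n < ennreal (e / (4 * (M + 1)\<^sup>2))) sequentially"
    by (rule order_tendstoD(2)[OF tl0])
  obtain n where n: "tl n < ennreal (e / (4 * (M + 1)\<^sup>2))" "real n > R" "real n > 0"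
  proof -
    obtain N :: nat where "real N > max R 0" using reals_Archimedean2 by blast
    moreover obtain N' where "\<And>n. n \<ge> N' \<Longrightarrow> tl n < ennreal (e / (4 * (M + 1)\<^sup>2))"
      using ev by (auto simp: eventually_sequentially)
    ultimately show ?thesis using that[of "max N N'"] by auto
  qed
  define P where "P = real n"
  define Ir where "Ir = enn2real I"
  have IIr: "I = ennreal Ir" using Ifin by (simp add: Ir_def I_def)
  have Ir0: "Ir \<ge> 0" by (simp add: Ir_def)
  define \<delta> where "\<delta> = min 1 (sqrt (e / (2 * (Ir + 1))))"
  have d0: "\<delta> > 0" using e Ir0 by (simp add: \<delta>_def)
  have d1: "\<delta> \<le> 1" by (simp add: \<delta>_def)
  have d2: "\<delta>\<^sup>2 * Ir \<le> e / 2"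
  proof -
    have "\<delta>\<^sup>2 \<le> (sqrt (e / (2 * (Ir + 1))))\<^sup>2" using d0 by (intro power_mono) (auto simp: \<delta>_def)
    also have "\<dots> = e / (2 * (Ir + 1))" using e Ir0 by simp
    finally have "\<delta>\<^sup>2 * Ir \<le> e / (2 * (Ir + 1)) * Ir" using Ir0 by (intro mult_right_mono) auto
    also have "\<dots> \<le> e / 2"
      using e Ir0 by (simp add: field_simps)
    finally show ?thesis .
  qed
  have bd: "u x = 0" if "b \<in> Basis" "\<bar>x \<bullet> b\<bar> = P" for x b
  proof -
    have "norm x > R" using Basis_le_norm[OF that(1), of x] that(2) n(2) P_def by linarith
    then show ?thesis by (rule us)
  qed
  have P0: "P > 0" using n(3) by (simp add: P_def)
  have cubeP: "cube n = cbox (-(P *\<^sub>R One)) (P *\<^sub>R One)" by (simp add: cube_def P_def)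
  obtain t where t0: "trig t" "\<And>x. x \<in> cbox (-(P *\<^sub>R One)) (P *\<^sub>R One) \<Longrightarrow> cmod (u x - t x) < \<delta>"
      "\<And>x. \<exists>y\<in>cbox (-(P *\<^sub>R One)) (P *\<^sub>R One). t x = t y"
  proof (rule torus_approx[where u=u and P=P and \<delta>=\<delta>])
    show "continuous_on UNIV u" by (rule uc)
    show "P > 0" by (rule P0)
    show "\<And>x b. b \<in> Basis \<Longrightarrow> \<bar>x \<bullet> b\<bar> = P \<Longrightarrow> u x = 0" by (rule bd)
    show "\<delta> > 0" by (rule d0)
  qed (rule that)
  then have t: "trig t" "\<And>x. x \<in> cube n \<Longrightarrow> cmod (u x - t x) < \<delta>" "\<And>x. \<exists>y\<in>cube n. t x = t y"
    unfolding cubeP by auto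
  define rr where "rr = (\<lambda>x. \<delta>\<^sup>2 * G x + (M + 1)\<^sup>2 * (G x * indicator (- cube n) x))"
  have pw: "(cmod (h x - E x * t x))\<^sup>2 \<le> rr x" for x
  proof (cases "x \<in> cube n")
    case True
    have "h x = E x * u x" using E0[of x] by (simp add: u_def)
    then have "cmod (h x - E x * t x) = cmod (E x) * cmod (u x - t x)" by (simp add: right_diff_distrib[symmetric] norm_mult)
    also have "\<dots> \<le> cmod (E x) * \<delta>" using t(2)[OF True] by (intro mult_left_mono) auto
    finally have "(cmod (h x - E x * t x))\<^sup>2 \<le> (cmod (E x) * \<delta>)\<^sup>2" by (intro power_mono) auto
    then show ?thesis using True G0[of x] by (simp add: rr_def G_def power_mult_distrib mult.commute)
  next
    case False
    then obtain b where b: "b \<in> Basis" "\<bar>x \<bullet> b\<bar> > P" unfolding cube_def mem_box P_def by (auto simp: abs_if)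
    then have "norm x > R" using Basis_le_norm[OF b(1), of x] n(2) P_def by linarith
    then have hx: "h x = 0" by (rule hs)
    obtain y where y: "y \<in> cube n" "t x = t y" using t(3) by blast
    have "cmod (t y) \<le> cmod (u y) + cmod (u y - t y)" using norm_triangle_ineq4[of "u y" "u y - t y"] by simp
    also have "\<dots> \<le> M + 1" using uM[of y] t(2)[OF y(1)] d1 by linarith
    finally have ty: "cmod (t x) \<le> M + 1" using y(2) by simp
    have "cmod (h x - E x * t x) = cmod (E x) * cmod (t x)" by (simp add: hx norm_mult)
    also have "\<dots> \<le> cmod (E x) * (M + 1)" using ty by (intro mult_left_mono) auto
    finally have "(cmod (h x - E x * t x))\<^sup>2 \<le> (cmod (E x) * (M + 1))\<^sup>2" by (intro power_mono) auto
    then have A': "(cmod (h x - E x * t x))\<^sup>2 \<le> (M + 1)\<^sup>2 * (cmod (E x))\<^sup>2"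
      by (simp add: power_mult_distrib mult.commute)
    have nn: "0 \<le> \<delta>\<^sup>2 * (cmod (E x))\<^sup>2" by simp
    have "rr x = \<delta>\<^sup>2 * (cmod (E x))\<^sup>2 + (M + 1)\<^sup>2 * (cmod (E x))\<^sup>2" using False by (simp add: rr_def G_def)
    then show ?thesis using A' nn by linarith
  qed
  have "(\<integral>\<^sup>+x. ennreal ((cmod (h x - E x * t x))\<^sup>2) \<partial>\<mu>) \<le> (\<integral>\<^sup>+x. ennreal (rr x) \<partial>\<mu>)"
    by (intro nn_integral_mono ennreal_leI pw)
  also have "(\<integral>\<^sup>+x. ennreal (rr x) \<partial>\<mu>) =
      (\<integral>\<^sup>+x. ennreal (\<delta>\<^sup>2) * ennreal (G x) + ennreal ((M + 1)\<^sup>2) * (ennreal (G x) * indicator (- cube n) x) \<partial>\<mu>)"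
    by (intro nn_integral_cong) (simp add: rr_def G0 ennreal_plus ennreal_mult ennreal_indicator[symmetric] del: ennreal_indicator)
  also have "\<dots> = ennreal (\<delta>\<^sup>2) * I + ennreal ((M + 1)\<^sup>2) * tl n"
    unfolding I_def tl_def mu
    by (subst nn_integral_add) (measurable, simp add: nn_integral_cmult)
  also have "\<dots> \<le> ennreal (e / 2) + ennreal (e / 4)"
  proof (rule add_mono)
    show "ennreal (\<delta>\<^sup>2) * I \<le> ennreal (e / 2)" using d2 Ir0 by (simp add: IIr ennreal_mult[symmetric] ennreal_leI del: ennreal_le_iff)
    have "ennreal ((M + 1)\<^sup>2) * tl n \<le> ennreal ((M + 1)\<^sup>2) * ennreal (e / (4 * (M + 1)\<^sup>2))"
      using n(1) by (intro mult_left_mono) auto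
    also have "\<dots> = ennreal (e / 4)" using M(1) e by (simp add: ennreal_mult[symmetric])
    finally show "ennreal ((M + 1)\<^sup>2) * tl n \<le> ennreal (e / 4)" .
  qed
  also have "\<dots> < ennreal e" using e by (simp add: ennreal_plus[symmetric] ennreal_less_iff del: ennreal_plus)
  finally show ?thesis using t(1) by blast
qed

lemma spanK_cong: "(\<And>\<phi>. v \<phi> = w \<phi>) \<Longrightarrow> spanK K v \<Longrightarrow> spanK K w"
  by (metis ext)

theorem proposition4p2:
  fixes \<theta> :: "'l::euclidean_space \<Rightarrow> 'l \<Rightarrow> real"
    and br :: "'l \<Rightarrow> 'l \<Rightarrow> real"
    and J :: "'l \<Rightarrow> 'l"
    and q :: "'l \<Rightarrow> 'q::euclidean_space"
    and j :: "'q \<Rightarrow> 'l"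
    and \<kappa> :: real
    and \<mu>C :: "'q measure"
  assumes theta_lin: "\<And>\<eta>. linear (\<theta> \<eta>)"
    and br_bilin: "bilinear br"
    and theta_shift: "\<And>\<eta> \<xi> \<tau>. \<theta> (\<eta> + \<xi>) \<tau> = \<theta> \<eta> \<tau> + br \<xi> \<tau>"
    and omega_nondeg: "\<And>\<xi>. (\<forall>\<xi>'. omega_of br \<xi> \<xi>' = 0) \<Longrightarrow> \<xi> = 0"
    and MN_inter: "Mker br \<inter> Nker br = {0}"
    and MN_sum: "\<And>\<tau>. \<exists>m n. m \<in> Mker br \<and> n \<in> Nker br \<and> \<tau> = m + n"
    and q_lin: "linear q"
    and q_surj: "surj q"
    and q_ker: "\<And>\<tau>. q \<tau> = 0 \<longleftrightarrow> \<tau> \<in> Mker br"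
    and theta_M: "\<And>\<eta> \<tau>. \<tau> \<in> Mker br \<Longrightarrow> \<theta> \<eta> \<tau> = 0"
    and J_lin: "linear J"
    and J_sq: "\<And>\<xi>. J (J \<xi>) = - \<xi>"
    and J_omega: "\<And>\<xi> \<xi>'. omega_of br (J \<xi>) (J \<xi>') = omega_of br \<xi> \<xi>'"
    and g_pos: "\<And>\<tau>. \<tau> \<noteq> 0 \<Longrightarrow> g_of br J \<tau> \<tau> > 0"
    and j_lin: "linear j"
    and j_sect: "\<And>\<phi>. q (j \<phi>) = \<phi>"
    and j_JM: "\<And>\<phi>. j \<phi> \<in> J ` Mker br"
    and kappa_pos: "\<kappa> > 0"
    and muC_def: "\<mu>C = density lborel (\<lambda>_. ennreal \<kappa>)"
    and muC_norm: "\<exists>\<eta>. (\<integral>\<phi>. exp (- g_of br J (j (\<phi> - q \<eta>)) (j (\<phi> - q \<eta>))) \<partial>\<mu>C) = 1"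
  shows "\<forall>f :: 'q \<Rightarrow> complex. f \<in> borel_measurable \<mu>C
           \<and> (\<integral>\<^sup>+ \<phi>. ennreal ((cmod (f \<phi>))\<^sup>2) \<partial>\<mu>C) < \<infinity> \<longrightarrow>
           (\<forall>\<epsilon>>0. \<exists>Z :: 'l set. \<exists>a :: 'l \<Rightarrow> complex. finite Z \<and>
              (\<integral>\<^sup>+ \<phi>. ennreal ((cmod (f \<phi> - (\<Sum>\<zeta>\<in>Z. a \<zeta> * Khat \<theta> br J q j \<zeta> \<phi>)))\<^sup>2) \<partial>\<mu>C)
                < ennreal \<epsilon>)"
proof (intro allI impI)
  fix f :: "'q \<Rightarrow> complex" and \<epsilon> :: real
  assume f: "f \<in> borel_measurable \<mu>C \<and> (\<integral>\<^sup>+ \<phi>. ennreal ((cmod (f \<phi>))\<^sup>2) \<partial>\<mu>C) < \<infinity>"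
    and e: "\<epsilon> > 0"
    define KK where "KK = Khat \<theta> br J q j"
    obtain \<eta> where \<eta>: "(\<integral>\<phi>. exp (- g_of br J (j (\<phi> - q \<eta>)) (j (\<phi> - q \<eta>))) \<partial>\<mu>C) = 1"
      using muC_norm by blast
    define E where "E = KK \<eta>"
    have Ec: "continuous_on UNIV (KK \<zeta>)" for \<zeta>
      unfolding KK_def by (rule Khat_cont[OF theta_lin br_bilin J_lin j_lin])
    have Km: "KK \<zeta> \<in> borel_measurable \<mu>C" for \<zeta>
      using borel_measurable_continuous_onI[OF Ec[of \<zeta>]] by (simp add: muC_def)
    have E0: "E \<phi> \<noteq> 0" for \<phi> by (simp add: E_def KK_def Khat_def)
    have EN: "(cmod (E \<phi>))\<^sup>2 = exp (- g_of br J (j (\<phi> - q \<eta>)) (j (\<phi> - q \<eta>)))" for \<phi>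
      unfolding E_def KK_def by (rule Khat_norm)
    have Eint: "integrable \<mu>C (\<lambda>\<phi>. exp (- g_of br J (j (\<phi> - q \<eta>)) (j (\<phi> - q \<eta>))))"
      using \<eta> not_integrable_integral_eq by fastforce
    have EI: "(\<integral>\<^sup>+x. ennreal ((cmod (E x))\<^sup>2) \<partial>\<mu>C) < \<infinity>"
      using Eint unfolding integrable_iff_bounded EN by simp
    have spanE: "spanK KK (\<lambda>\<phi>. E \<phi> * tev ps \<phi>)" for ps
    proof (induction ps)
      case Nil
      then show ?case using spanK_0 by simp
    next
      case (Cons p ps)
      obtain c k where p: "p = (c, k)" by (cases p)
      obtain m where m: "m \<in> Mker br" "\<And>\<phi>. br m (j \<phi>) = k \<bullet> \<phi>"
        using freq[OF br_bilin MN_sum q_ker j_lin j_sect] by blast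
      have qm: "q m = 0" using q_ker m(1) by blast
      have sh: "exp (\<i> * of_real (k \<bullet> \<phi>)) * E \<phi> = exp (\<i> * of_real (br m (j (q \<eta>)))) * KK (\<eta> + m) \<phi>" for \<phi>
        unfolding E_def KK_def by (rule Khat_shift[OF br_bilin theta_shift q_lin j_lin qm m(2)])
      have "spanK KK (\<lambda>\<phi>. (c * exp (\<i> * of_real (br m (j (q \<eta>))))) * KK (\<eta> + m) \<phi> + E \<phi> * tev ps \<phi>)"
        by (intro spanK_add spanK_single Cons)
      moreover have "(c * exp (\<i> * of_real (br m (j (q \<eta>))))) * KK (\<eta> + m) \<phi> + E \<phi> * tev ps \<phi> = E \<phi> * tev (p # ps) \<phi>" for \<phi>
      proof -
        have "(c * exp (\<i> * of_real (br m (j (q \<eta>))))) * KK (\<eta> + m) \<phi> = c * (exp (\<i> * of_real (br m (j (q \<eta>)))) * KK (\<eta> + m) \<phi>)"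
          by (simp add: mult.assoc)
        also have "\<dots> = c * (exp (\<i> * of_real (k \<bullet> \<phi>)) * E \<phi>)" using sh[of \<phi>] by simp
        also have "\<dots> = E \<phi> * (c * exp (\<i> * of_real (k \<bullet> \<phi>)))" by (simp add: mult.commute mult.left_commute)
        finally show ?thesis by (simp add: p distrib_left)
      qed
      ultimately show ?case
        by (rule spanK_cong[rotated])
    qed
    have fm: "f \<in> borel_measurable \<mu>C" using f by blast
    define e' where "e' = \<epsilon> / 20"
    have e': "e' > 0" using e by (simp add: e'_def)
    obtain R where R: "R > 0"
      "(\<integral>\<^sup>+x. ennreal ((cmod (f x - (if cmod (f x) \<le> R \<and> norm x \<le> R then f x else 0)))\<^sup>2) \<partial>\<mu>C) < ennreal e'"
      using stepA[OF muC_def fm _, of "ennreal e'"] f e' by auto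
    define f1 where "f1 = (\<lambda>x. if cmod (f x) \<le> R \<and> norm x \<le> R then f x else 0)"
    have f1m: "f1 \<in> borel_measurable \<mu>C" unfolding f1_def using fm by (simp add: muC_def) measurable
    obtain h where h: "continuous_on UNIV h" "\<And>x. norm x > R + 1 \<Longrightarrow> h x = 0"
      "(\<integral>\<^sup>+x. ennreal ((cmod (f1 x - h x))\<^sup>2) \<partial>\<mu>C) < ennreal e'"
    proof -
      have f1b: "\<And>x. cmod (f1 x) \<le> R" using R(1) by (simp add: f1_def)
      have f1s: "\<And>x. norm x > R \<Longrightarrow> f1 x = 0" by (simp add: f1_def)
      show ?thesis using stepB[OF muC_def f1m R(1) f1b f1s, where e="ennreal e'"] e' that by auto
    qed
    have hm: "h \<in> borel_measurable \<mu>C"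
      using borel_measurable_continuous_onI[OF h(1)] by (simp add: muC_def)
    obtain t where t: "trig t" "(\<integral>\<^sup>+x. ennreal ((cmod (h x - E x * t x))\<^sup>2) \<partial>\<mu>C) < ennreal e'"
      using stepC[OF muC_def h(1) h(2) Ec[of \<eta>, folded E_def] E0 EI e'] by blast
    obtain ps where ps: "\<And>x. t x = tev ps x" using t(1) unfolding trig_def by blast
    obtain Z a where Za: "finite Z" "\<And>\<phi>. E \<phi> * t \<phi> = (\<Sum>\<zeta>\<in>Z. a \<zeta> * KK \<zeta> \<phi>)"
      using spanE[of ps] unfolding spanK_def ps[symmetric] by blast
    define S where "S = (\<lambda>\<phi>. \<Sum>\<zeta>\<in>Z. a \<zeta> * KK \<zeta> \<phi>)"
    have Sm: "S \<in> borel_measurable \<mu>C" unfolding S_def using Km by measurable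
    have D3: "(\<integral>\<^sup>+x. ennreal ((cmod (h x - S x))\<^sup>2) \<partial>\<mu>C) < ennreal e'"
      using t(2) by (simp add: S_def Za(2)[symmetric])
    have "(\<integral>\<^sup>+x. ennreal ((cmod (f x - S x))\<^sup>2) \<partial>\<mu>C) \<le>
        2 * (\<integral>\<^sup>+x. ennreal ((cmod (f x - f1 x))\<^sup>2) \<partial>\<mu>C) + 2 * (\<integral>\<^sup>+x. ennreal ((cmod (f1 x - S x))\<^sup>2) \<partial>\<mu>C)"
      by (rule tri[OF fm f1m Sm])
    also have "\<dots> \<le> 2 * (\<integral>\<^sup>+x. ennreal ((cmod (f x - f1 x))\<^sup>2) \<partial>\<mu>C) +
        2 * (2 * (\<integral>\<^sup>+x. ennreal ((cmod (f1 x - h x))\<^sup>2) \<partial>\<mu>C) + 2 * (\<integral>\<^sup>+x. ennreal ((cmod (h x - S x))\<^sup>2) \<partial>\<mu>C))"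
      by (intro add_mono mult_left_mono tri[OF f1m hm Sm]) auto
    also have "\<dots> \<le> 2 * ennreal e' + 2 * (2 * ennreal e' + 2 * ennreal e')"
      using R(2) h(3) D3 unfolding f1_def
      by (intro add_mono mult_left_mono less_imp_le) auto
    also have "\<dots> = ennreal (10 * e')"
    proof -
      have x: "e' \<ge> 0" using e' by simp
      have "ennreal (10 * e') = ennreal (2 * e' + 2 * (2 * e' + 2 * e'))" by simp
      also have "\<dots> = 2 * ennreal e' + 2 * (2 * ennreal e' + 2 * ennreal e')"
        using x by (simp only: ennreal_plus ennreal_mult' mult_nonneg_nonneg add_nonneg_nonneg zero_le_numeral ennreal_numeral)
      finally show ?thesis by simp
    qed
    also have "\<dots> < ennreal \<epsilon>" using e by (simp add: e'_def ennreal_less_iff)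
    finally show "\<exists>Z :: 'l set. \<exists>a :: 'l \<Rightarrow> complex. finite Z \<and>
              (\<integral>\<^sup>+ \<phi>. ennreal ((cmod (f \<phi> - (\<Sum>\<zeta>\<in>Z. a \<zeta> * Khat \<theta> br J q j \<zeta> \<phi>)))\<^sup>2) \<partial>\<mu>C)
                < ennreal \<epsilon>"
      using Za(1) unfolding S_def KK_def by blast
qed

end
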